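(* Let $\{z_n\}_{n\ge 0}$ be a sequence of positive real numbers satisfying $a_nz_{n+1}=b_nz_n+c_nz_{n-1}$ for all $n\ge 1$, where $a_n,b_n,c_n>0$. For $n\ge1$ let $\lambda_n=\frac{b_n+\sqrt{b_n^2+4a_nc_n}}{2a_n}$ be the positive root of $a_n\lambda^2-b_n\lambda-c_n=0$. Suppose that $z_0,z_1,z_2,z_3$ is log-convex (i.e. $z_0z_2\ge z_1^2$ and $z_1z_3\ge z_2^2$) and that $a_n\lambda_{n-1}\lambda_{n+1}-b_n\lambda_{n-1}-c_n\ge 0$ for all $n\ge 2$. Then $\{z_n\}_{n\ge 0}$ is log-convex.
   Context: A sequence $a_0,a_1,\ldots$ of nonnegative real numbers is log-convex if $a_{k-1}a_{k+1}\ge a_k^2$ for all $k\ge 1$. *)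

theory Defs
  imports Complex_Main
begin

definition log_convex :: "(nat \<Rightarrow> real) \<Rightarrow> bool" where
  "log_convex a \<longleftrightarrow> (\<forall>k. a k \<ge> 0) \<and> (\<forall>k\<ge>1. a (k - 1) * a (k + 1) \<ge> (a k)^2)"

end

theory Submission
  imports Defs
begin

lemma root_facts:
  fixes a b c l :: real
  assumes a: "a > 0" and b: "b > 0" and c: "c > 0"
    and l: "l = (b + sqrt (b^2 + 4 * a * c)) / (2 * a)"
  shows "l > 0" "a * l^2 = b * l + c" "2 * a * l - b \<ge> 0"
proof -
  define s where "s = sqrt (b^2 + 4 * a * c)"
  have "0 < 4 * a * c" using a c by simp
  hence nn: "0 \<le> b^2 + 4 * a * c" by (metis add_nonneg_nonneg less_eq_real_def zero_le_power2)
  have s0: "s \<ge> 0" unfolding s_def using nn by simp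
  from nn have s2: "s^2 = b^2 + 4 * a * c" unfolding s_def by simp
  have L: "2 * a * l = b + s" using a l unfolding s_def by simp
  have "2 * a * l > 0" using L b s0 by simp
  thus "l > 0" using a by (simp add: zero_less_mult_iff)
  show "2 * a * l - b \<ge> 0" using L s0 by simp
  have "4 * a * (a * l^2) = (2*a*l)^2" by (simp add: power2_eq_square)
  also have "\<dots> = (b+s)^2" using L by simp
  also have "\<dots> = b^2 + s^2 + 2*b*s" by (rule power2_sum)
  also have "\<dots> = b^2 + (b^2 + 4*a*c) + 2*b*s" using s2 by simp
  also have "\<dots> = 2*b*(b+s) + 4*a*c" by (simp add: power2_eq_square algebra_simps)
  also have "\<dots> = 2*b*(2*a*l) + 4*a*c" using L by simp
  also have "\<dots> = 4 * a * (b * l + c)" by (simp add: algebra_simps)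
  finally show "a * l^2 = b * l + c" using a by simp
qed

lemma below_root:
  fixes a b c l x :: real
  assumes a: "a > 0" and b: "b > 0" and c: "c > 0"
    and l: "l = (b + sqrt (b^2 + 4 * a * c)) / (2 * a)"
    and x: "x > 0" and h: "a * x^2 \<le> b * x + c"
  shows "x \<le> l"
proof (rule ccontr)
  assume "\<not> x \<le> l"
  hence xl: "x > l" by simp
  note r = root_facts[OF a b c l]
  have "a * x^2 - b * x - c = (a * x^2 - b * x - c) - (a * l^2 - b * l - c)" using r by simp
  also have "\<dots> = (x - l) * (a * (x + l) - b)" by (simp add: power2_eq_square algebra_simps)
  finally have eq: "a * x^2 - b * x - c = (x - l) * (a * (x + l) - b)" .
  have "a * x > a * l" using mult_strict_left_mono[OF xl a] .
  hence "a * (x + l) - b > 0" using r(3) by (simp add: algebra_simps)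
  hence "(x - l) * (a * (x + l) - b) > 0" using xl by simp
  thus False using eq h by simp
qed

theorem theorem3p1:
  fixes z a b c lam :: "nat \<Rightarrow> real"
  assumes zpos: "\<And>n. z n > 0"
    and apos: "\<And>n. n \<ge> 1 \<Longrightarrow> a n > 0"
    and bpos: "\<And>n. n \<ge> 1 \<Longrightarrow> b n > 0"
    and cpos: "\<And>n. n \<ge> 1 \<Longrightarrow> c n > 0"
    and rec: "\<And>n. n \<ge> 1 \<Longrightarrow> a n * z (n + 1) = b n * z n + c n * z (n - 1)"
    and lam_def: "\<And>n. n \<ge> 1 \<Longrightarrow> lam n = (b n + sqrt ((b n)^2 + 4 * a n * c n)) / (2 * a n)"
    and init1: "z 0 * z 2 \<ge> (z 1)^2"
    and init2: "z 1 * z 3 \<ge> (z 2)^2"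
    and cond: "\<And>n. n \<ge> 2 \<Longrightarrow> a n * lam (n - 1) * lam (n + 1) - b n * lam (n - 1) - c n \<ge> 0"
  shows "log_convex z"
proof -
  have lpos: "lam k > 0" and lfix: "a k * (lam k)^2 = b k * lam k + c k" if "k \<ge> 1" for k
    using root_facts[OF apos[OF that] bpos[OF that] cpos[OF that] lam_def[OF that]] by auto
  have step1: "lam k * z k \<le> z (k + 1)" if k: "k \<ge> 1" and h: "z k \<le> lam k * z (k - 1)" for k
  proof -
    have ak: "a k > 0" "c k > 0" "lam k > 0" using apos bpos cpos lpos k by auto
    have "a k * lam k * z (k+1) = lam k * (b k * z k + c k * z (k - 1))" using rec[OF k] by simp
    also have "\<dots> = b k * lam k * z k + c k * (lam k * z (k - 1))" by (simp add: algebra_simps)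
    also have "\<dots> \<ge> b k * lam k * z k + c k * z k" using h ak by simp
    finally have "a k * lam k * z (k+1) \<ge> (b k * lam k + c k) * z k" by (simp add: algebra_simps)
    also have "(b k * lam k + c k) * z k = (a k * (lam k)^2) * z k"
      using lfix[OF k] by simp
    also have "\<dots> = a k * lam k * (lam k * z k)" by (simp add: power2_eq_square)
    finally show ?thesis using ak by (simp add: mult_le_cancel_left_pos)
  qed
  have step2: "z (n + 1) \<le> lam (n + 1) * z n" if n: "n \<ge> 2" and h: "lam (n - 1) * z (n - 1) \<le> z n" for n
  proof -
    have n1: "n \<ge> 1" "n - 1 \<ge> 1" using n by auto
    have ak: "a n > 0" "c n > 0" "lam (n - 1) > 0" "b n > 0" using apos bpos cpos lpos n1 by auto
    have "a n * lam (n - 1) * z (n+1) = lam (n - 1) * (b n * z n + c n * z (n - 1))" using rec[OF n1(1)] by simp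
    also have "\<dots> = b n * lam (n - 1) * z n + c n * (lam (n - 1) * z (n - 1))" by (simp add: algebra_simps)
    also have "\<dots> \<le> b n * lam (n - 1) * z n + c n * z n" using h ak by simp
    also have "\<dots> = (b n * lam (n - 1) + c n) * z n" by (simp add: algebra_simps)
    also have "\<dots> \<le> (a n * lam (n - 1) * lam (n + 1)) * z n"
      using cond[OF n] zpos[of n] by (intro mult_right_mono) auto
    finally have "a n * lam (n - 1) * z (n+1) \<le> a n * lam (n - 1) * (lam (n + 1) * z n)"
      by (simp add: algebra_simps)
    moreover have "a n * lam (n - 1) > 0" using ak by simp
    ultimately show ?thesis by (simp add: mult_le_cancel_left_pos)
  qed
  have base: "z k \<le> lam k * z (k - 1)" if k: "k \<ge> 1" and h: "z (k - 1) * z (k + 1) \<ge> (z k)^2" for k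
  proof -
    define x where "x = z k / z (k - 1)"
    have zk: "z (k - 1) > 0" "z k > 0" using zpos by auto
    have x0: "x > 0" using zk unfolding x_def by simp
    have "a k * x^2 * (z (k - 1))^2 = a k * (z k)^2" unfolding x_def using zk
      by (simp add: power_divide)
    also have "\<dots> \<le> a k * (z (k - 1) * z (k + 1))" using h apos[OF k] by simp
    also have "\<dots> = z (k - 1) * (a k * z (k + 1))" by (simp add: algebra_simps)
    also have "\<dots> = z (k - 1) * (b k * z k + c k * z (k - 1))" using rec[OF k] by simp
    also have "\<dots> = (b k * x + c k) * (z (k - 1))^2" unfolding x_def using zk
      by (simp add: power2_eq_square field_simps)
    finally have "a k * x^2 \<le> b k * x + c k" using zk by simp
    from below_root[OF apos[OF k] bpos[OF k] cpos[OF k] lam_def[OF k] x0 this]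
    have "x \<le> lam k" .
    thus ?thesis unfolding x_def using zk by (simp add: divide_le_eq)
  qed
  have e1: "(1::nat) - 1 = 0" "(1::nat) + 1 = 2" by simp_all
  have h1: "z (1 - 1) * z (1 + 1) \<ge> (z 1)^2" using init1 unfolding e1 .
  have Q0': "z 1 \<le> lam 1 * z (1 - 1)" using base[of 1] h1 by blast
  have Q0: "z (0 + 1) \<le> lam (0 + 1) * z 0" using Q0' by simp
  have e2: "(2::nat) - 1 = 1" "(2::nat) + 1 = 3" by simp_all
  have h2: "z (2 - 1) * z (2 + 1) \<ge> (z 2)^2" using init2 unfolding e2 .
  have Q1': "z 2 \<le> lam 2 * z (2 - 1)" using base[of 2] h2 by simp
  have Q1: "z 2 \<le> lam 2 * z 1" using Q1' unfolding e2(1) .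
  have Q: "z (m + 1) \<le> lam (m + 1) * z m" for m
  proof (induction m rule: nat_less_induct)
    case (1 m)
    have "m = 0 \<or> m = 1 \<or> m = (m - 2) + 2" by arith
    then consider "m = 0" | "m = 1" | j where "m = j + 2" by blast
    thus ?case
    proof cases
      case 1 thus ?thesis using Q0 by simp
    next
      case 2 thus ?thesis using Q1 by (simp only: e1(2))
    next
      case (3 j)
      have "j < m" using 3 by simp
      hence "z (j + 1) \<le> lam (j + 1) * z j" using "1.IH" by blast
      hence s1: "lam (j+1) * z (j+1) \<le> z (j + 1 + 1)" using step1[of "j+1"] by simp
      have e1: "j + 2 - 1 = j + 1" "j + 1 + 1 = j + 2" by simp_all
      have "lam (j + 2 - 1) * z (j + 2 - 1) \<le> z (j + 2)" using s1 unfolding e1 .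
      from step2[OF _ this] have "z (j + 2 + 1) \<le> lam (j + 2 + 1) * z (j + 2)" by simp
      thus ?thesis using 3 by simp
    qed
  qed
  show ?thesis unfolding log_convex_def
  proof (intro conjI allI impI)
    fix k show "z k \<ge> 0" using zpos[of k] by simp
  next
    fix k :: nat assume k: "k \<ge> 1"
    have q: "z k \<le> lam k * z (k - 1)" using Q[of "k - 1"] k by simp
    have s: "lam k * z k \<le> z (k + 1)" using step1[OF k q] .
    have "(z k)^2 = z k * z k" by (simp add: power2_eq_square)
    also have "\<dots> \<le> (lam k * z (k - 1)) * z k" using q zpos[of k] by (intro mult_right_mono) auto
    also have "\<dots> = z (k - 1) * (lam k * z k)" by simp
    also have "\<dots> \<le> z (k - 1) * z (k + 1)" using s zpos[of "k-1"] by (intro mult_left_mono) auto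
    finally show "z (k - 1) * z (k + 1) \<ge> (z k)^2" .
  qed
qed

end
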